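(* Under the hypotheses of the ratio-version correlator cluster expansion, $$\langle O_AO_B\rangle_c=\langle O_A\rangle\langle O_B\rangle\left[\exp\Bigg\{\sum_{\substack{\Gamma\subseteq\mathcal L_{AB}\text{ finite},\ G_\Gamma\text{ connected}\\ \mathrm{supp}(\Gamma)\cap A\ne\emptyset,\ \mathrm{supp}(\Gamma)\cap B\ne\emptyset}}\big(\mathfrak K^{AB}(\Gamma)+\mathfrak K(\Gamma)-\mathfrak K^{A}(\Gamma)-\mathfrak K^{B}(\Gamma)\big)\Bigg\}-1\right],$$ where $\mathfrak K^X(\Gamma):=\sum_{\mathbf W\text{ connected},\ \text{loop-set}(\mathbf W)=\Gamma}\phi(\mathbf W)Z^X_{\mathbf W}$ for $X\in\{\emptyset,A,B,AB\}$, $\mathfrak K=\mathfrak K^\emptyset$.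
   Context: Let $|\psi\rangle$ be a PEPS on a finite graph $G=(V,E)$; $A,B\subseteq V$ disjoint, $O_A,O_B$ operators on the physical sites of $A$, $B$. $\mathcal Z=\mathcal Z^\emptyset=\langle\psi|\psi\rangle>0$; $\mathcal Z^X$ for $X=A,B,AB$ is the network for $\langle\psi|O_X|\psi\rangle$ with $O_{AB}=O_AO_B$; $\langle O_X\rangle=\mathcal Z^X/\mathcal Z$, $\langle O_AO_B\rangle_c=\langle O_AO_B\rangle-\langle O_A\rangle\langle O_B\rangle$. A BP fixed point of $\mathcal Z$ (messages $\mu_{v\to w}$, $I_{vw}=\mu_{v\to w}\star\mu_{w\to v}\ne0$, vertex tensor contracted with all incoming messages but one proportional to the outgoing one) is used for all networks; $\mathcal P^\perp_{vw}=\mathbb 1-\mu_{v\to w}\otimes\mu_{w\to v}/I_{vw}$. $\tilde Z^X_F$: contraction of $\mathcal Z^X$ with $\mathcal P^\perp$ on edges of $F$, $\mu\otimes\mu/I$ elsewhere; $Z^X_{BP}=\tilde Z^X_\emptyset$. $\mathcal L_{AB}$: connected subgraphs with at least one edge in which every vertex outside $A\cup B$ has degree $\ge2$; weights $Z^X_l=\tilde Z^X_{E(l)}/Z^X_{BP}$; supports are vertex sets; compatible = vertex-disjoint. Clusters $\mathbf W=\{(l_i,\eta_i)\}$ over $\mathcal L_{AB}$, $Z^X_{\mathbf W}=\prod(Z^X_{l_i})^{\eta_i}$, loop-set$(\mathbf W)=\{l_i\}$; interaction graph: $\eta_i$ vertices per $l_i$, adjacent iff equal or incompatible; connected if connected;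 $G_\Gamma$ is the interaction graph of $\{(l,1)\}_{l\in\Gamma}$, $\mathrm{supp}(\Gamma)=\bigcup_{l\in\Gamma}\mathrm{supp}(l)$. Ursell function $\phi(\mathbf W)=\frac1{\prod\eta_i!}\sum_C(-1)^{|E(C)|}$ over connected spanning subgraphs of the interaction graph. The ratio-version correlator expansion hypotheses: $Z^X_{BP}\ne0$, $\langle O_A\rangle,\langle O_B\rangle\ne0$, and absolutely convergent cluster expansions $\log\mathcal Z^X=\log Z^X_{BP}+\sum_{\mathbf W\text{ conn.}}\phi(\mathbf W)Z^X_{\mathbf W}$ over $\mathcal L_{AB}$ for all $X\in\{\emptyset,A,B,AB\}$. *)

theory Defs
  imports "HOL-Analysis.Analysis" "HOL-Library.Multiset" "HOL-Library.FuncSet"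
begin

text \<open>A finite simple graph: vertex set V, edges are 2-element subsets of V.
  Bond (virtual) index set of edge e is D e, physical index set at v is P v.\<close>

definition peps_data :: "'v set \<Rightarrow> 'v set set \<Rightarrow> ('v set \<Rightarrow> 'd set) \<Rightarrow> ('v \<Rightarrow> 'p set) \<Rightarrow> bool" where
  "peps_data V E D P \<longleftrightarrow> finite V \<and>
     (\<forall>e\<in>E. \<exists>v w. e = {v, w} \<and> v \<noteq> w \<and> v \<in> V \<and> w \<in> V) \<and>
     (\<forall>e\<in>E. finite (D e)) \<and> (\<forall>v\<in>V. finite (P v))"

definition inc :: "'v set set \<Rightarrow> 'v \<Rightarrow> 'v set set" where
  "inc E v = {e \<in> E. v \<in> e}"

definition half_edges :: "'v set set \<Rightarrow> ('v set \<times> 'v) set" where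
  "half_edges E = {(e, v). e \<in> E \<and> v \<in> e}"

definition opairs :: "'v set \<Rightarrow> ('v \<times> 'v) set" where
  "opairs e = {(v, w). v \<in> e \<and> w \<in> e \<and> v \<noteq> w}"

definition graph_connected :: "'a set \<Rightarrow> 'a set set \<Rightarrow> bool" where
  "graph_connected N C \<longleftrightarrow> (\<forall>x\<in>N. \<forall>y\<in>N. (x, y) \<in> {(a, b). {a, b} \<in> C}\<^sup>*)"

section \<open>Operators (matrices on physical configurations of all of V)\<close>

definition op_id :: "'v set \<Rightarrow> ('v \<Rightarrow> 'p set) \<Rightarrow> ('v \<Rightarrow> 'p) \<Rightarrow> ('v \<Rightarrow> 'p) \<Rightarrow> complex" where
  "op_id V P s s' = (if s = s' then 1 else 0)"

text \<open>an operator O on the sites S (matrix on configurations of S) tensored with identity\<close>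
definition op_on :: "'v set \<Rightarrow> 'v set \<Rightarrow> (('v \<Rightarrow> 'p) \<Rightarrow> ('v \<Rightarrow> 'p) \<Rightarrow> complex)
    \<Rightarrow> ('v \<Rightarrow> 'p) \<Rightarrow> ('v \<Rightarrow> 'p) \<Rightarrow> complex" where
  "op_on V S Q s s' = Q (restrict s S) (restrict s' S) *
       (if restrict s (V - S) = restrict s' (V - S) then 1 else 0)"

definition op_mult :: "'v set \<Rightarrow> ('v \<Rightarrow> 'p set) \<Rightarrow> (('v \<Rightarrow> 'p) \<Rightarrow> ('v \<Rightarrow> 'p) \<Rightarrow> complex)
    \<Rightarrow> (('v \<Rightarrow> 'p) \<Rightarrow> ('v \<Rightarrow> 'p) \<Rightarrow> complex) \<Rightarrow> ('v \<Rightarrow> 'p) \<Rightarrow> ('v \<Rightarrow> 'p) \<Rightarrow> complex" where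
  "op_mult V P Q1 Q2 s s' = (\<Sum>t\<in>PiE V P. Q1 s t * Q2 t s')"

section \<open>Double-layer tensor network for <psi|Op|psi> with bond matrices M\<close>

text \<open>T v p alpha: PEPS tensor at v, physical index p, virtual indices alpha on the
  edges incident to v. Double-layer bond index = (bra index, ket index).
  M e gamma: the matrix inserted on edge e, gamma assigns a double-layer index to each
  endpoint of e. The identity bond matrix gives the exact network.\<close>

definition net :: "'v set \<Rightarrow> 'v set set \<Rightarrow> ('v set \<Rightarrow> 'd set) \<Rightarrow> ('v \<Rightarrow> 'p set)
    \<Rightarrow> ('v \<Rightarrow> 'p \<Rightarrow> ('v set \<Rightarrow> 'd) \<Rightarrow> complex)
    \<Rightarrow> (('v \<Rightarrow> 'p) \<Rightarrow> ('v \<Rightarrow> 'p) \<Rightarrow> complex)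
    \<Rightarrow> ('v set \<Rightarrow> ('v \<Rightarrow> 'd \<times> 'd) \<Rightarrow> complex) \<Rightarrow> complex" where
  "net V E D P T Op M =
     (\<Sum>s\<in>PiE V P. \<Sum>s'\<in>PiE V P. Op s s' *
        (\<Sum>\<beta>\<in>PiE (half_edges E) (\<lambda>h. D (fst h) \<times> D (fst h)).
            (\<Prod>e\<in>E. M e (\<lambda>v. \<beta> (e, v))) *
            (\<Prod>v\<in>V. cnj (T v (s v) (restrict (\<lambda>e. fst (\<beta> (e, v))) (inc E v))) *
                      T v (s' v) (restrict (\<lambda>e. snd (\<beta> (e, v))) (inc E v)))))"

definition id_bond :: "'v set \<Rightarrow> ('v \<Rightarrow> 'd \<times> 'd) \<Rightarrow> complex" where
  "id_bond e \<gamma> = (if \<forall>v\<in>e. \<forall>w\<in>e. \<gamma> v = \<gamma> w then 1 else 0)"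

text \<open>The exact network Z^X = <psi|O_X|psi>.\<close>
definition Zfull where
  "Zfull V E D P T Op = net V E D P T Op id_bond"

text \<open>mu v w : message from v to w (a vector on D {v,w} x D {v,w}).
  I_e = mu_{v->w} star mu_{w->v}.\<close>
definition Imsg :: "('v set \<Rightarrow> 'd set) \<Rightarrow> ('v \<Rightarrow> 'v \<Rightarrow> 'd \<times> 'd \<Rightarrow> complex) \<Rightarrow> 'v set \<Rightarrow> complex" where
  "Imsg D \<mu> e = (\<Sum>k\<in>D e \<times> D e. \<Prod>(v, w)\<in>opairs e. \<mu> v w k)"

text \<open>mu_{v->w} (x) mu_{w->v} / I_vw: leg at v is contracted with the incoming mu_{w->v}\<close>
definition bp_bond :: "('v set \<Rightarrow> 'd set) \<Rightarrow> ('v \<Rightarrow> 'v \<Rightarrow> 'd \<times> 'd \<Rightarrow> complex)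
    \<Rightarrow> 'v set \<Rightarrow> ('v \<Rightarrow> 'd \<times> 'd) \<Rightarrow> complex" where
  "bp_bond D \<mu> e \<gamma> = (\<Prod>(v, w)\<in>opairs e. \<mu> w v (\<gamma> v)) / Imsg D \<mu> e"

definition perp_bond where
  "perp_bond D \<mu> e \<gamma> = id_bond e \<gamma> - bp_bond D \<mu> e \<gamma>"

text \<open>vertex tensor of the norm network Z at v (double layer, physical index summed)\<close>
definition vertex_tensor :: "'v set set \<Rightarrow> ('v \<Rightarrow> 'p set) \<Rightarrow> ('v \<Rightarrow> 'p \<Rightarrow> ('v set \<Rightarrow> 'd) \<Rightarrow> complex)
    \<Rightarrow> 'v \<Rightarrow> ('v set \<Rightarrow> 'd \<times> 'd) \<Rightarrow> complex" where
  "vertex_tensor E P T v \<gamma> = (\<Sum>p\<in>P v. cnj (T v p (restrict (\<lambda>e. fst (\<gamma> e)) (inc E v))) *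
                                        T v p (restrict (\<lambda>e. snd (\<gamma> e)) (inc E v)))"

definition bp_fixed_point :: "'v set \<Rightarrow> 'v set set \<Rightarrow> ('v set \<Rightarrow> 'd set) \<Rightarrow> ('v \<Rightarrow> 'p set)
    \<Rightarrow> ('v \<Rightarrow> 'p \<Rightarrow> ('v set \<Rightarrow> 'd) \<Rightarrow> complex) \<Rightarrow> ('v \<Rightarrow> 'v \<Rightarrow> 'd \<times> 'd \<Rightarrow> complex) \<Rightarrow> bool" where
  "bp_fixed_point V E D P T \<mu> \<longleftrightarrow>
     (\<forall>e\<in>E. Imsg D \<mu> e \<noteq> 0) \<and>
     (\<forall>v\<in>V. \<forall>w. {v, w} \<in> E \<longrightarrow>
        (\<exists>c::complex. \<forall>k\<in>D {v, w} \<times> D {v, w}.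
           (\<Sum>\<gamma>\<in>{\<gamma> \<in> PiE (inc E v) (\<lambda>e. D e \<times> D e). \<gamma> {v, w} = k}.
               vertex_tensor E P T v \<gamma> *
               (\<Prod>u\<in>{u. {u, v} \<in> E} - {w}. \<mu> u v (\<gamma> {u, v})))
           = c * \<mu> v w k))"

definition Ztil where
  "Ztil V E D P T \<mu> Op F = net V E D P T Op (\<lambda>e. if e \<in> F then perp_bond D \<mu> e else bp_bond D \<mu> e)"

definition ZBP where
  "ZBP V E D P T \<mu> Op = Ztil V E D P T \<mu> Op {}"

text \<open>loop weight Z^X_l (a loop is identified with its edge set)\<close>
definition Zloop where
  "Zloop V E D P T \<mu> Op l = Ztil V E D P T \<mu> Op l / ZBP V E D P T \<mu> Op"

definition supp :: "'v set set \<Rightarrow> 'v set" where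
  "supp l = \<Union>l"

definition degree_in :: "'v set set \<Rightarrow> 'v \<Rightarrow> nat" where
  "degree_in F v = card {e \<in> F. v \<in> e}"

definition loops_AB :: "'v set set \<Rightarrow> 'v set \<Rightarrow> 'v set \<Rightarrow> 'v set set set" where
  "loops_AB E A B = {F. F \<subseteq> E \<and> F \<noteq> {} \<and> graph_connected (supp F) F \<and>
                        (\<forall>v \<in> supp F - (A \<union> B). degree_in F v \<ge> 2)}"

definition compatible :: "'v set set \<Rightarrow> 'v set set \<Rightarrow> bool" where
  "compatible l l' \<longleftrightarrow> supp l \<inter> supp l' = {}"

text \<open>clusters are nonempty multisets of loops (loop l_i with multiplicity eta_i).
  Interaction graph: eta_i copies (l,k), k < eta_i, of each loop l; adjacent iff
  distinct and (equal loops or incompatible).\<close>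
definition ig_nodes :: "'v set set multiset \<Rightarrow> ('v set set \<times> nat) set" where
  "ig_nodes W = {(l, k). l \<in># W \<and> k < count W l}"

definition ig_edges :: "'v set set multiset \<Rightarrow> ('v set set \<times> nat) set set" where
  "ig_edges W = {{x, y} | x y. x \<in> ig_nodes W \<and> y \<in> ig_nodes W \<and> x \<noteq> y \<and>
                   (fst x = fst y \<or> \<not> compatible (fst x) (fst y))}"

definition cluster_connected :: "'v set set multiset \<Rightarrow> bool" where
  "cluster_connected W \<longleftrightarrow> graph_connected (ig_nodes W) (ig_edges W)"

definition ursell :: "'v set set multiset \<Rightarrow> complex" where
  "ursell W = (1 / (\<Prod>l\<in>set_mset W. of_nat (fact (count W l)))) *
     (\<Sum>C\<in>{C. C \<subseteq> ig_edges W \<and> graph_connected (ig_nodes W) C}. (-1) ^ card C)"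

definition conn_clusters :: "'v set set set \<Rightarrow> 'v set set multiset set" where
  "conn_clusters L = {W. W \<noteq> {#} \<and> set_mset W \<subseteq> L \<and> cluster_connected W}"

definition Zcluster where
  "Zcluster V E D P T \<mu> Op W = (\<Prod>l\<in>#W. Zloop V E D P T \<mu> Op l)"

definition cluster_expansion_holds where
  "cluster_expansion_holds V E D P T \<mu> L Op \<longleftrightarrow>
     (\<lambda>W. norm (ursell W * Zcluster V E D P T \<mu> Op W)) summable_on conn_clusters L \<and>
     Zfull V E D P T Op = ZBP V E D P T \<mu> Op *
        exp (\<Sum>\<^sub>\<infinity>W\<in>conn_clusters L. ursell W * Zcluster V E D P T \<mu> Op W)"

definition Kfun where
  "Kfun V E D P T \<mu> L Op \<Gamma> =
     (\<Sum>\<^sub>\<infinity>W\<in>{W \<in> conn_clusters L. set_mset W = \<Gamma>}. ursell W * Zcluster V E D P T \<mu> Op W)"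

end

theory Submission
  imports Defs
begin

definition mg :: "('a \<Rightarrow> 'b) \<Rightarrow> ('a \<Rightarrow> 'b) \<Rightarrow> 'a set \<Rightarrow> 'a \<Rightarrow> 'b" where
  "mg f1 f2 Y = (\<lambda>h. if h \<in> Y then f2 h else f1 h)"

lemma mg_PiE: "f1 \<in> PiE X C \<Longrightarrow> f2 \<in> PiE Y C \<Longrightarrow> mg f1 f2 Y \<in> PiE (X \<union> Y) C"
  unfolding mg_def by (auto simp: PiE_def extensional_def)

lemma restrict_mg1: "f1 \<in> PiE X C \<Longrightarrow> X \<inter> Y = {} \<Longrightarrow> restrict (mg f1 f2 Y) X = f1"
  unfolding mg_def by (auto simp: PiE_def extensional_def fun_eq_iff)

lemma restrict_mg2: "f2 \<in> PiE Y C \<Longrightarrow> restrict (mg f1 f2 Y) Y = f2"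
  unfolding mg_def by (auto simp: PiE_def extensional_def fun_eq_iff)

lemma sum_PiE_split:
  assumes "X \<inter> Y = {}"
  shows "(\<Sum>f\<in>PiE (X \<union> Y) C. g f) = (\<Sum>f1\<in>PiE X C. \<Sum>f2\<in>PiE Y C. g (mg f1 f2 Y))"
proof -
  have "(\<Sum>f1\<in>PiE X C. \<Sum>f2\<in>PiE Y C. g (mg f1 f2 Y)) = (\<Sum>p\<in>PiE X C \<times> PiE Y C. g (mg (fst p) (snd p) Y))"
    by (simp add: sum.cartesian_product case_prod_beta)
  also have "\<dots> = (\<Sum>f\<in>PiE (X \<union> Y) C. g f)"
  proof (rule sum.reindex_bij_witness[where j = "\<lambda>p. mg (fst p) (snd p) Y" and i = "\<lambda>f. (restrict f X, restrict f Y)"])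
    fix p assume "p \<in> PiE X C \<times> PiE Y C"
    then show "(restrict (mg (fst p) (snd p) Y) X, restrict (mg (fst p) (snd p) Y) Y) = p"
      using assms by (cases p) (metis SigmaE fst_conv snd_conv restrict_mg1 restrict_mg2)
    show "mg (fst p) (snd p) Y \<in> PiE (X \<union> Y) C" using \<open>p \<in> _\<close> by (metis mem_Times_iff mg_PiE)
  next
    fix f assume f: "f \<in> PiE (X \<union> Y) C"
    then show "mg (fst (restrict f X, restrict f Y)) (snd (restrict f X, restrict f Y)) Y = f"
      by (auto simp: mg_def PiE_def extensional_def fun_eq_iff)
    show "(restrict f X, restrict f Y) \<in> PiE X C \<times> PiE Y C" using f by auto
  qed simp
  finally show ?thesis ..
qed

definition vtf :: "'v set set \<Rightarrow> ('v \<Rightarrow> 'p \<Rightarrow> ('v set \<Rightarrow> 'd) \<Rightarrow> complex) \<Rightarrow> 'v \<Rightarrow> 'p \<Rightarrow> 'p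
     \<Rightarrow> ('v set \<times> 'v \<Rightarrow> 'd \<times> 'd) \<Rightarrow> complex" where
  "vtf E T v a b \<beta> = cnj (T v a (restrict (\<lambda>e. fst (\<beta> (e, v))) (inc E v))) *
      T v b (restrict (\<lambda>e. snd (\<beta> (e, v))) (inc E v))"

definition HSf :: "'v set set \<Rightarrow> 'v set \<Rightarrow> ('v set \<times> 'v) set" where
  "HSf E S = {h \<in> half_edges E. snd h \<in> S}"
definition HNf :: "'v set set \<Rightarrow> 'v set \<Rightarrow> ('v set \<times> 'v) set" where
  "HNf E S = {h \<in> half_edges E. snd h \<notin> S}"
definition ESf :: "'v set set \<Rightarrow> 'v set \<Rightarrow> 'v set set" where
  "ESf E S = {e \<in> E. e \<inter> S \<noteq> {}}"
definition opSf :: "'v set \<Rightarrow> 'v set \<Rightarrow> ('v \<times> 'v) set" where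
  "opSf S e = {p \<in> opairs e. fst p \<in> S}"
definition opNf :: "'v set \<Rightarrow> 'v set \<Rightarrow> ('v \<times> 'v) set" where
  "opNf S e = {p \<in> opairs e. fst p \<notin> S}"

definition X1 where
  "X1 V E D T S \<mu> M s1 s1' \<beta>1 =
     (\<Prod>e\<in>E - ESf E S. M e (\<lambda>v. \<beta>1 (e, v))) *
     (\<Prod>e\<in>ESf E S. (\<Prod>p\<in>opNf S e. \<mu> (snd p) (fst p) (\<beta>1 (e, fst p))) / Imsg D \<mu> e) *
     (\<Prod>v\<in>V - S. vtf E T v (s1 v) (s1' v) \<beta>1)"

definition X2 where
  "X2 E T S \<mu> s2 s2' \<beta>2 =
     (\<Prod>e\<in>ESf E S. \<Prod>p\<in>opSf S e. \<mu> (snd p) (fst p) (\<beta>2 (e, fst p))) *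
     (\<Prod>v\<in>S. vtf E T v (s2 v) (s2' v) \<beta>2)"

lemma peps_fin:
  assumes "peps_data V E D P"
  shows "finite E" "\<And>e. e \<in> E \<Longrightarrow> finite e" "finite (half_edges E)"
    "\<And>e. e \<in> E \<Longrightarrow> finite (opairs e)"
proof -
  have fV: "finite V" using assms by (simp add: peps_data_def)
  have sub: "E \<subseteq> Pow V" using assms by (auto simp: peps_data_def)
  show fE: "finite E" using finite_subset[OF sub] fV by simp
  show fe: "\<And>e. e \<in> E \<Longrightarrow> finite e" using sub fV by (meson PowD finite_subset subsetD)
  show "finite (half_edges E)"
    by (rule finite_subset[of _ "E \<times> V"]) (use sub fE fV in \<open>auto simp: half_edges_def\<close>)
  show "\<And>e. e \<in> E \<Longrightarrow> finite (opairs e)"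
    by (rule finite_subset[of _ "e \<times> e" for e]) (use fe in \<open>auto simp: opairs_def\<close>)
qed

lemma edge_split:
  assumes pd: "peps_data V E D P"
    and Mb: "\<forall>e\<in>E. e \<inter> S \<noteq> {} \<longrightarrow> M e = bp_bond D \<mu> e"
  shows "(\<Prod>e\<in>E. M e (\<lambda>v. mg \<beta>1 \<beta>2 (HSf E S) (e, v))) =
     ((\<Prod>e\<in>E - ESf E S. M e (\<lambda>v. \<beta>1 (e, v))) *
     (\<Prod>e\<in>ESf E S. (\<Prod>p\<in>opNf S e. \<mu> (snd p) (fst p) (\<beta>1 (e, fst p))) / Imsg D \<mu> e)) *
     (\<Prod>e\<in>ESf E S. \<Prod>p\<in>opSf S e. \<mu> (snd p) (fst p) (\<beta>2 (e, fst p)))"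
proof -
  note fin = peps_fin[OF pd]
  have "(\<Prod>e\<in>E. M e (\<lambda>v. mg \<beta>1 \<beta>2 (HSf E S) (e, v))) =
     (\<Prod>e\<in>E - ESf E S. M e (\<lambda>v. mg \<beta>1 \<beta>2 (HSf E S) (e, v))) * (\<Prod>e\<in>ESf E S. M e (\<lambda>v. mg \<beta>1 \<beta>2 (HSf E S) (e, v)))"
    by (rule prod.subset_diff) (auto simp: ESf_def fin)
  also have "(\<Prod>e\<in>E - ESf E S. M e (\<lambda>v. mg \<beta>1 \<beta>2 (HSf E S) (e, v))) = (\<Prod>e\<in>E - ESf E S. M e (\<lambda>v. \<beta>1 (e, v)))"
  proof (rule prod.cong[OF refl])
    fix e assume "e \<in> E - ESf E S"
    then have "(\<lambda>v. mg \<beta>1 \<beta>2 (HSf E S) (e, v)) = (\<lambda>v. \<beta>1 (e, v))"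
      by (auto simp: mg_def HSf_def ESf_def half_edges_def fun_eq_iff)
    then show "M e (\<lambda>v. mg \<beta>1 \<beta>2 (HSf E S) (e, v)) = M e (\<lambda>v. \<beta>1 (e, v))" by simp
  qed
  also have "(\<Prod>e\<in>ESf E S. M e (\<lambda>v. mg \<beta>1 \<beta>2 (HSf E S) (e, v))) =
     (\<Prod>e\<in>ESf E S. ((\<Prod>p\<in>opNf S e. \<mu> (snd p) (fst p) (\<beta>1 (e, fst p))) / Imsg D \<mu> e) *
                   (\<Prod>p\<in>opSf S e. \<mu> (snd p) (fst p) (\<beta>2 (e, fst p))))"
  proof (rule prod.cong[OF refl])
    fix e assume e: "e \<in> ESf E S"
    then have eE: "e \<in> E" by (simp add: ESf_def)
    have "M e = bp_bond D \<mu> e" using Mb e by (auto simp: ESf_def)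
    then have "M e (\<lambda>v. mg \<beta>1 \<beta>2 (HSf E S) (e, v)) =
       (\<Prod>p\<in>opairs e. \<mu> (snd p) (fst p) (mg \<beta>1 \<beta>2 (HSf E S) (e, fst p))) / Imsg D \<mu> e"
      by (simp add: bp_bond_def case_prod_beta)
    also have "(\<Prod>p\<in>opairs e. \<mu> (snd p) (fst p) (mg \<beta>1 \<beta>2 (HSf E S) (e, fst p))) =
       (\<Prod>p\<in>opairs e - opSf S e. \<mu> (snd p) (fst p) (mg \<beta>1 \<beta>2 (HSf E S) (e, fst p))) *
       (\<Prod>p\<in>opSf S e. \<mu> (snd p) (fst p) (mg \<beta>1 \<beta>2 (HSf E S) (e, fst p)))"
      by (rule prod.subset_diff) (auto simp: opSf_def fin eE)
    also have "opairs e - opSf S e = opNf S e" by (auto simp: opSf_def opNf_def)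
    also have "(\<Prod>p\<in>opNf S e. \<mu> (snd p) (fst p) (mg \<beta>1 \<beta>2 (HSf E S) (e, fst p))) =
        (\<Prod>p\<in>opNf S e. \<mu> (snd p) (fst p) (\<beta>1 (e, fst p)))"
      by (rule prod.cong[OF refl]) (auto simp: mg_def HSf_def opNf_def)
    also have "(\<Prod>p\<in>opSf S e. \<mu> (snd p) (fst p) (mg \<beta>1 \<beta>2 (HSf E S) (e, fst p))) =
        (\<Prod>p\<in>opSf S e. \<mu> (snd p) (fst p) (\<beta>2 (e, fst p)))"
      by (rule prod.cong[OF refl]) (auto simp: mg_def HSf_def opSf_def opairs_def half_edges_def eE)
    finally show "M e (\<lambda>v. mg \<beta>1 \<beta>2 (HSf E S) (e, v)) =
       ((\<Prod>p\<in>opNf S e. \<mu> (snd p) (fst p) (\<beta>1 (e, fst p))) / Imsg D \<mu> e) *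
                   (\<Prod>p\<in>opSf S e. \<mu> (snd p) (fst p) (\<beta>2 (e, fst p)))" by simp
  qed
  also have "\<dots> = (\<Prod>e\<in>ESf E S. (\<Prod>p\<in>opNf S e. \<mu> (snd p) (fst p) (\<beta>1 (e, fst p))) / Imsg D \<mu> e) *
     (\<Prod>e\<in>ESf E S. \<Prod>p\<in>opSf S e. \<mu> (snd p) (fst p) (\<beta>2 (e, fst p)))"
    by (rule prod.distrib)
  finally show ?thesis by (simp add: mult.assoc)
qed

lemma vertex_split:
  assumes pd: "peps_data V E D P" and SV: "S \<subseteq> V"
  shows "(\<Prod>v\<in>V. vtf E T v (mg s1 s2 S v) (mg s1' s2' S v) (mg \<beta>1 \<beta>2 (HSf E S))) =
    (\<Prod>v\<in>V - S. vtf E T v (s1 v) (s1' v) \<beta>1) * (\<Prod>v\<in>S. vtf E T v (s2 v) (s2' v) \<beta>2)"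
proof -
  have fV: "finite V" using pd by (simp add: peps_data_def)
  have "(\<Prod>v\<in>V. vtf E T v (mg s1 s2 S v) (mg s1' s2' S v) (mg \<beta>1 \<beta>2 (HSf E S))) =
     (\<Prod>v\<in>V - S. vtf E T v (mg s1 s2 S v) (mg s1' s2' S v) (mg \<beta>1 \<beta>2 (HSf E S))) *
     (\<Prod>v\<in>S. vtf E T v (mg s1 s2 S v) (mg s1' s2' S v) (mg \<beta>1 \<beta>2 (HSf E S)))"
    by (rule prod.subset_diff) (use SV fV in auto)
  also have "(\<Prod>v\<in>V - S. vtf E T v (mg s1 s2 S v) (mg s1' s2' S v) (mg \<beta>1 \<beta>2 (HSf E S))) =
     (\<Prod>v\<in>V - S. vtf E T v (s1 v) (s1' v) \<beta>1)"
  proof (rule prod.cong[OF refl])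
    fix v assume v: "v \<in> V - S"
    have nh: "\<And>e. (e, v) \<notin> HSf E S" using v by (auto simp: HSf_def)
    show "vtf E T v (mg s1 s2 S v) (mg s1' s2' S v) (mg \<beta>1 \<beta>2 (HSf E S)) = vtf E T v (s1 v) (s1' v) \<beta>1"
      using v by (simp add: vtf_def mg_def nh)
  qed
  also have "(\<Prod>v\<in>S. vtf E T v (mg s1 s2 S v) (mg s1' s2' S v) (mg \<beta>1 \<beta>2 (HSf E S))) =
     (\<Prod>v\<in>S. vtf E T v (s2 v) (s2' v) \<beta>2)"
  proof (rule prod.cong[OF refl])
    fix v assume v: "v \<in> S"
    have 1: "restrict (\<lambda>e. fst (mg \<beta>1 \<beta>2 (HSf E S) (e, v))) (inc E v) = restrict (\<lambda>e. fst (\<beta>2 (e, v))) (inc E v)"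
      by (rule restrict_ext) (use v in \<open>auto simp: mg_def HSf_def inc_def half_edges_def\<close>)
    have 2: "restrict (\<lambda>e. snd (mg \<beta>1 \<beta>2 (HSf E S) (e, v))) (inc E v) = restrict (\<lambda>e. snd (\<beta>2 (e, v))) (inc E v)"
      by (rule restrict_ext) (use v in \<open>auto simp: mg_def HSf_def inc_def half_edges_def\<close>)
    show "vtf E T v (mg s1 s2 S v) (mg s1' s2' S v) (mg \<beta>1 \<beta>2 (HSf E S)) = vtf E T v (s2 v) (s2' v) \<beta>2"
      using v 1 2 by (simp add: vtf_def mg_def)
  qed
  finally show ?thesis .
qed

definition Nf where
  "Nf V E D P T S \<mu> Q M = (\<Sum>s1\<in>PiE (V - S) P. \<Sum>s1'\<in>PiE (V - S) P.
      \<Sum>\<beta>1\<in>PiE (HNf E S) (\<lambda>h. D (fst h) \<times> D (fst h)). Q s1 s1' * X1 V E D T S \<mu> M s1 s1' \<beta>1)"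

definition Bf where
  "Bf E D P T S \<mu> R = (\<Sum>s2\<in>PiE S P. \<Sum>s2'\<in>PiE S P.
      \<Sum>\<beta>2\<in>PiE (HSf E S) (\<lambda>h. D (fst h) \<times> D (fst h)). R s2 s2' * X2 E T S \<mu> s2 s2' \<beta>2)"

lemma net_factor:
  assumes pd: "peps_data V E D P" and SV: "S \<subseteq> V"
    and Op: "\<forall>s\<in>PiE V P. \<forall>s'\<in>PiE V P. Op s s' =
       Q (restrict s (V - S)) (restrict s' (V - S)) * R (restrict s S) (restrict s' S)"
    and Mb: "\<forall>e\<in>E. e \<inter> S \<noteq> {} \<longrightarrow> M e = bp_bond D \<mu> e"
  shows "net V E D P T Op M = Nf V E D P T S \<mu> Q M * Bf E D P T S \<mu> R"
proof -
  define Dd where "Dd = (\<lambda>h::'a set \<times> 'a. D (fst h) \<times> D (fst h))"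
  define HS where "HS = HSf E S"
  define HN where "HN = HNf E S"
  define F where "F = (\<lambda>s1 s2 s1' s2' \<beta>1 \<beta>2. (Q s1 s1' * X1 V E D T S \<mu> M s1 s1' \<beta>1) *
       (R s2 s2' * X2 E T S \<mu> s2 s2' \<beta>2))"
  have Veq: "V = (V - S) \<union> S" using SV by auto
  have outer: "(\<Sum>s\<in>PiE V P. g s) = (\<Sum>s1\<in>PiE (V - S) P. \<Sum>s2\<in>PiE S P. g (mg s1 s2 S))" for g :: "_ \<Rightarrow> complex"
  proof -
    have "(V - S) \<inter> S = {}" by auto
    from sum_PiE_split[OF this, of g P] show ?thesis using Veq[symmetric] by simp
  qed
  have Heq: "half_edges E = HN \<union> HS" by (auto simp: HN_def HS_def HNf_def HSf_def)
  have inner: "(\<Sum>\<beta>\<in>PiE (half_edges E) Dd. g \<beta>) = (\<Sum>\<beta>1\<in>PiE HN Dd. \<Sum>\<beta>2\<in>PiE HS Dd. g (mg \<beta>1 \<beta>2 HS))" for g :: "_ \<Rightarrow> complex"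
  proof -
    have "HN \<inter> HS = {}" by (auto simp: HN_def HS_def HNf_def HSf_def)
    from sum_PiE_split[OF this, of g Dd] show ?thesis using Heq by simp
  qed
  have "net V E D P T Op M = (\<Sum>s\<in>PiE V P. \<Sum>s'\<in>PiE V P. Op s s' *
      (\<Sum>\<beta>\<in>PiE (half_edges E) Dd. (\<Prod>e\<in>E. M e (\<lambda>v. \<beta> (e, v))) * (\<Prod>v\<in>V. vtf E T v (s v) (s' v) \<beta>)))"
    by (simp add: net_def vtf_def Dd_def)
  also have "\<dots> = (\<Sum>s1\<in>PiE (V - S) P. \<Sum>s2\<in>PiE S P. \<Sum>s1'\<in>PiE (V - S) P. \<Sum>s2'\<in>PiE S P.
      \<Sum>\<beta>1\<in>PiE HN Dd. \<Sum>\<beta>2\<in>PiE HS Dd. F s1 s2 s1' s2' \<beta>1 \<beta>2)"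
    unfolding outer
  proof (intro sum.cong refl)
    fix s1 s2 s1' s2' assume s1: "s1 \<in> PiE (V - S) P" and s2: "s2 \<in> PiE S P"
      and s1': "s1' \<in> PiE (V - S) P" and s2': "s2' \<in> PiE S P"
    have rs: "restrict (mg s1 s2 S) (V - S) = s1" "restrict (mg s1 s2 S) S = s2"
         "restrict (mg s1' s2' S) (V - S) = s1'" "restrict (mg s1' s2' S) S = s2'"
      using restrict_mg1[OF s1, of S s2] restrict_mg2[OF s2] restrict_mg1[OF s1', of S s2'] restrict_mg2[OF s2'] by auto
    have "mg s1 s2 S \<in> PiE V P" "mg s1' s2' S \<in> PiE V P"
      using mg_PiE[OF s1 s2] mg_PiE[OF s1' s2'] Veq by metis+
    then have opeq: "Op (mg s1 s2 S) (mg s1' s2' S) = Q s1 s1' * R s2 s2'" using Op rs by simp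
    show "Op (mg s1 s2 S) (mg s1' s2' S) *
      (\<Sum>\<beta>\<in>PiE (half_edges E) Dd. (\<Prod>e\<in>E. M e (\<lambda>v. \<beta> (e, v))) * (\<Prod>v\<in>V. vtf E T v (mg s1 s2 S v) (mg s1' s2' S v) \<beta>)) =
      (\<Sum>\<beta>1\<in>PiE HN Dd. \<Sum>\<beta>2\<in>PiE HS Dd. F s1 s2 s1' s2' \<beta>1 \<beta>2)"
      unfolding inner opeq sum_distrib_left
    proof (intro sum.cong refl)
      fix \<beta>1 \<beta>2
      show "Q s1 s1' * R s2 s2' * ((\<Prod>e\<in>E. M e (\<lambda>v. mg \<beta>1 \<beta>2 HS (e, v))) *
         (\<Prod>v\<in>V. vtf E T v (mg s1 s2 S v) (mg s1' s2' S v) (mg \<beta>1 \<beta>2 HS))) = F s1 s2 s1' s2' \<beta>1 \<beta>2"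
        unfolding HS_def edge_split[OF pd Mb] vertex_split[OF pd SV] F_def X1_def X2_def
        by (simp add: ac_simps)
    qed
  qed
  also have "\<dots> = (\<Sum>s1\<in>PiE (V - S) P. \<Sum>s1'\<in>PiE (V - S) P. \<Sum>\<beta>1\<in>PiE HN Dd.
      \<Sum>s2\<in>PiE S P. \<Sum>s2'\<in>PiE S P. \<Sum>\<beta>2\<in>PiE HS Dd. F s1 s2 s1' s2' \<beta>1 \<beta>2)"
  proof (rule sum.cong[OF refl])
    fix s1
    have "(\<Sum>s2\<in>PiE S P. \<Sum>s1'\<in>PiE (V - S) P. \<Sum>s2'\<in>PiE S P.
      \<Sum>\<beta>1\<in>PiE HN Dd. \<Sum>\<beta>2\<in>PiE HS Dd. F s1 s2 s1' s2' \<beta>1 \<beta>2) =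
      (\<Sum>s1'\<in>PiE (V - S) P. \<Sum>s2\<in>PiE S P. \<Sum>s2'\<in>PiE S P.
      \<Sum>\<beta>1\<in>PiE HN Dd. \<Sum>\<beta>2\<in>PiE HS Dd. F s1 s2 s1' s2' \<beta>1 \<beta>2)"
      by (rule sum.swap)
    also have "\<dots> = (\<Sum>s1'\<in>PiE (V - S) P. \<Sum>\<beta>1\<in>PiE HN Dd.
      \<Sum>s2\<in>PiE S P. \<Sum>s2'\<in>PiE S P. \<Sum>\<beta>2\<in>PiE HS Dd. F s1 s2 s1' s2' \<beta>1 \<beta>2)"
    proof (rule sum.cong[OF refl])
      fix s1'
      have "(\<Sum>s2\<in>PiE S P. \<Sum>s2'\<in>PiE S P. \<Sum>\<beta>1\<in>PiE HN Dd. \<Sum>\<beta>2\<in>PiE HS Dd. F s1 s2 s1' s2' \<beta>1 \<beta>2) =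
        (\<Sum>s2\<in>PiE S P. \<Sum>\<beta>1\<in>PiE HN Dd. \<Sum>s2'\<in>PiE S P. \<Sum>\<beta>2\<in>PiE HS Dd. F s1 s2 s1' s2' \<beta>1 \<beta>2)"
        by (rule sum.cong[OF refl]) (rule sum.swap)
      also have "\<dots> = (\<Sum>\<beta>1\<in>PiE HN Dd. \<Sum>s2\<in>PiE S P. \<Sum>s2'\<in>PiE S P. \<Sum>\<beta>2\<in>PiE HS Dd. F s1 s2 s1' s2' \<beta>1 \<beta>2)"
        by (rule sum.swap)
      finally show "(\<Sum>s2\<in>PiE S P. \<Sum>s2'\<in>PiE S P. \<Sum>\<beta>1\<in>PiE HN Dd. \<Sum>\<beta>2\<in>PiE HS Dd. F s1 s2 s1' s2' \<beta>1 \<beta>2) =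
        (\<Sum>\<beta>1\<in>PiE HN Dd. \<Sum>s2\<in>PiE S P. \<Sum>s2'\<in>PiE S P. \<Sum>\<beta>2\<in>PiE HS Dd. F s1 s2 s1' s2' \<beta>1 \<beta>2)" .
    qed
    finally show "(\<Sum>s2\<in>PiE S P. \<Sum>s1'\<in>PiE (V - S) P. \<Sum>s2'\<in>PiE S P.
      \<Sum>\<beta>1\<in>PiE HN Dd. \<Sum>\<beta>2\<in>PiE HS Dd. F s1 s2 s1' s2' \<beta>1 \<beta>2) =
      (\<Sum>s1'\<in>PiE (V - S) P. \<Sum>\<beta>1\<in>PiE HN Dd.
      \<Sum>s2\<in>PiE S P. \<Sum>s2'\<in>PiE S P. \<Sum>\<beta>2\<in>PiE HS Dd. F s1 s2 s1' s2' \<beta>1 \<beta>2)" .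
  qed
  also have "\<dots> = Nf V E D P T S \<mu> Q M * Bf E D P T S \<mu> R"
    unfolding Nf_def Bf_def F_def Dd_def HS_def HN_def sum_distrib_right
    unfolding sum_distrib_left ..
  finally show ?thesis .
qed

lemma restrict_Un_eq:
  "(restrict f (X \<union> Y) = restrict g (X \<union> Y)) \<longleftrightarrow> (restrict f X = restrict g X \<and> restrict f Y = restrict g Y)"
  by (auto simp: fun_eq_iff restrict_def)

lemma op_id_split:
  assumes "S \<subseteq> V" "s \<in> PiE V P" "s' \<in> PiE V P"
  shows "op_id V P s s' = op_id (V - S) P (restrict s (V - S)) (restrict s' (V - S)) * op_id S P (restrict s S) (restrict s' S)"
proof -
  have "s = restrict s ((V - S) \<union> S)" "s' = restrict s' ((V - S) \<union> S)"
    using assms by (auto simp: PiE_def extensional_restrict Un_absorb2)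
  then have "(s = s') \<longleftrightarrow> restrict s (V - S) = restrict s' (V - S) \<and> restrict s S = restrict s' S"
    by (metis restrict_Un_eq)
  then show ?thesis by (simp add: op_id_def)
qed

lemma op_on_S_split:
  "op_on V S Ob s s' = op_id (V - S) P (restrict s (V - S)) (restrict s' (V - S)) * Ob (restrict s S) (restrict s' S)"
  by (simp add: op_on_def op_id_def)

lemma op_on_other_split:
  assumes "A' \<subseteq> V" "S \<subseteq> V" "A' \<inter> S = {}"
  shows "op_on V A' Ob s s' = op_on (V - S) A' Ob (restrict s (V - S)) (restrict s' (V - S)) * op_id S P (restrict s S) (restrict s' S)"
proof -
  have 1: "(V - S) \<inter> A' = A'" "(V - S) \<inter> (V - S - A') = V - S - A'" using assms by auto
  have 2: "V - A' = (V - S - A') \<union> S" using assms by auto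
  show ?thesis unfolding op_on_def op_id_def restrict_restrict 1 2 restrict_Un_eq by simp
qed

lemma op_mult_AB:
  assumes pd: "peps_data V E D P" and AB: "A \<subseteq> V" "B \<subseteq> V" "A \<inter> B = {}"
    and s: "s \<in> PiE V P" and s': "s' \<in> PiE V P"
  shows "op_mult V P (op_on V A OA) (op_on V B OB) s s' =
    OA (restrict s A) (restrict s' A) * OB (restrict s B) (restrict s' B) *
    (if restrict s (V - A - B) = restrict s' (V - A - B) then 1 else 0)"
proof -
  define t0 where "t0 = (\<lambda>v. if v \<in> A then s' v else s v)"
  have fin: "finite (PiE V P)" using pd by (intro finite_PiE) (auto simp: peps_data_def)
  have t0P: "t0 \<in> PiE V P" using s s' AB by (auto simp: t0_def PiE_def extensional_def)
  define g where "g = (\<lambda>t. op_on V A OA s t * op_on V B OB t s')"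
  have z: "g t = 0" if t: "t \<in> PiE V P - {t0}" for t
  proof (rule ccontr)
    assume "g t \<noteq> 0"
    then have e1: "restrict s (V - A) = restrict t (V - A)" and e2: "restrict t (V - B) = restrict s' (V - B)"
      by (auto simp: g_def op_on_def split: if_splits)
    have "t = t0"
    proof
      fix v show "t v = t0 v"
      proof (cases "v \<in> V")
        case True
        then show ?thesis using e1 e2 AB unfolding t0_def fun_eq_iff restrict_def
          by (metis Diff_iff disjoint_iff)
      next
        case False
        then show ?thesis using t s AB by (auto simp: t0_def PiE_def extensional_def)
      qed
    qed
    then show False using t by simp
  qed
  have "op_mult V P (op_on V A OA) (op_on V B OB) s s' = g t0 + sum g (PiE V P - {t0})"
    unfolding op_mult_def g_def[symmetric] using sum.remove[OF fin t0P] .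
  also have "sum g (PiE V P - {t0}) = 0" using z by (simp add: sum.neutral)
  finally have eq1: "op_mult V P (op_on V A OA) (op_on V B OB) s s' = g t0" by simp
  have f1: "restrict t0 A = restrict s' A" by (auto simp: t0_def restrict_def)
  have f2: "restrict t0 B = restrict s B" using AB by (auto simp: t0_def restrict_def fun_eq_iff)
  have f3: "restrict s (V - A) = restrict t0 (V - A)" by (auto simp: t0_def restrict_def)
  have f4: "(restrict t0 (V - B) = restrict s' (V - B)) \<longleftrightarrow> restrict s (V - A - B) = restrict s' (V - A - B)"
    using AB by (auto simp: t0_def restrict_def fun_eq_iff)
  show ?thesis unfolding eq1 g_def op_on_def f1 f2 f3 f4 by simp
qed

lemma op_AB_split:
  assumes pd: "peps_data V E D P" and AB: "A \<subseteq> V" "B \<subseteq> V" "A \<inter> B = {}"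
    and s: "s \<in> PiE V P" and s': "s' \<in> PiE V P"
  shows "op_mult V P (op_on V A OA) (op_on V B OB) s s' =
     op_on (V - B) A OA (restrict s (V - B)) (restrict s' (V - B)) * OB (restrict s B) (restrict s' B)"
    "op_mult V P (op_on V A OA) (op_on V B OB) s s' =
     op_on (V - A) B OB (restrict s (V - A)) (restrict s' (V - A)) * OA (restrict s A) (restrict s' A)"
proof -
  have 1: "(V - B) \<inter> A = A" "(V - B) \<inter> (V - B - A) = V - A - B"
       "(V - A) \<inter> B = B" "(V - A) \<inter> (V - A - B) = V - A - B" using AB by auto
  show "op_mult V P (op_on V A OA) (op_on V B OB) s s' =
     op_on (V - B) A OA (restrict s (V - B)) (restrict s' (V - B)) * OB (restrict s B) (restrict s' B)"
    unfolding op_mult_AB[OF assms] op_on_def restrict_restrict 1 by simp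
  show "op_mult V P (op_on V A OA) (op_on V B OB) s s' =
     op_on (V - A) B OB (restrict s (V - A)) (restrict s' (V - A)) * OA (restrict s A) (restrict s' A)"
    unfolding op_mult_AB[OF assms] op_on_def restrict_restrict 1 by simp
qed

lemma Ztil_factor:
  assumes pd: "peps_data V E D P" and SV: "S \<subseteq> V"
    and Op: "\<forall>s\<in>PiE V P. \<forall>s'\<in>PiE V P. Op s s' =
       Q (restrict s (V - S)) (restrict s' (V - S)) * R (restrict s S) (restrict s' S)"
    and F: "supp F \<inter> S = {}"
  shows "Ztil V E D P T \<mu> Op F =
     Nf V E D P T S \<mu> Q (\<lambda>e. if e \<in> F then perp_bond D \<mu> e else bp_bond D \<mu> e) * Bf E D P T S \<mu> R"
  unfolding Ztil_def
proof (rule net_factor[OF pd SV Op])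
  show "\<forall>e\<in>E. e \<inter> S \<noteq> {} \<longrightarrow> (if e \<in> F then perp_bond D \<mu> e else bp_bond D \<mu> e) = bp_bond D \<mu> e"
    using F by (auto simp: supp_def)
qed

lemma Zloop_eq:
  assumes pd: "peps_data V E D P" and SV: "S \<subseteq> V"
    and Op1: "\<forall>s\<in>PiE V P. \<forall>s'\<in>PiE V P. Op1 s s' =
       Q (restrict s (V - S)) (restrict s' (V - S)) * R1 (restrict s S) (restrict s' S)"
    and Op2: "\<forall>s\<in>PiE V P. \<forall>s'\<in>PiE V P. Op2 s s' =
       Q (restrict s (V - S)) (restrict s' (V - S)) * R2 (restrict s S) (restrict s' S)"
    and F: "supp F \<inter> S = {}"
    and nz1: "ZBP V E D P T \<mu> Op1 \<noteq> 0" and nz2: "ZBP V E D P T \<mu> Op2 \<noteq> 0"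
  shows "Zloop V E D P T \<mu> Op1 F = Zloop V E D P T \<mu> Op2 F"
proof -
  have e: "supp {} \<inter> S = {}" by (simp add: supp_def)
  note a1 = Ztil_factor[OF pd SV Op1 F, of T \<mu>] Ztil_factor[OF pd SV Op1 e, of T \<mu>]
  note a2 = Ztil_factor[OF pd SV Op2 F, of T \<mu>] Ztil_factor[OF pd SV Op2 e, of T \<mu>]
  have "Bf E D P T S \<mu> R1 \<noteq> 0" "Bf E D P T S \<mu> R2 \<noteq> 0"
    using nz1 nz2 a1(2) a2(2) by (auto simp: ZBP_def)
  then show ?thesis using nz1 nz2 unfolding Zloop_def ZBP_def a1 a2 by simp
qed

lemma ZBP_prod:
  assumes pd: "peps_data V E D P" and SV: "S \<subseteq> V"
    and Op11: "\<forall>s\<in>PiE V P. \<forall>s'\<in>PiE V P. Op11 s s' =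
       Q1 (restrict s (V - S)) (restrict s' (V - S)) * R1 (restrict s S) (restrict s' S)"
    and Op12: "\<forall>s\<in>PiE V P. \<forall>s'\<in>PiE V P. Op12 s s' =
       Q1 (restrict s (V - S)) (restrict s' (V - S)) * R2 (restrict s S) (restrict s' S)"
    and Op21: "\<forall>s\<in>PiE V P. \<forall>s'\<in>PiE V P. Op21 s s' =
       Q2 (restrict s (V - S)) (restrict s' (V - S)) * R1 (restrict s S) (restrict s' S)"
    and Op22: "\<forall>s\<in>PiE V P. \<forall>s'\<in>PiE V P. Op22 s s' =
       Q2 (restrict s (V - S)) (restrict s' (V - S)) * R2 (restrict s S) (restrict s' S)"
  shows "ZBP V E D P T \<mu> Op11 * ZBP V E D P T \<mu> Op22 = ZBP V E D P T \<mu> Op12 * ZBP V E D P T \<mu> Op21"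
proof -
  have e: "supp {} \<inter> S = {}" by (simp add: supp_def)
  show ?thesis unfolding ZBP_def Ztil_factor[OF pd SV Op11 e] Ztil_factor[OF pd SV Op12 e]
    Ztil_factor[OF pd SV Op21 e] Ztil_factor[OF pd SV Op22 e] by (simp add: ac_simps)
qed

lemma rtrancl_map:
  assumes "(x, y) \<in> R\<^sup>*" "\<And>a b. (a, b) \<in> R \<Longrightarrow> (f a, f b) \<in> R'\<^sup>*"
  shows "(f x, f y) \<in> R'\<^sup>*"
  using assms(1) by (induction rule: rtrancl_induct) (auto intro: rtrancl_trans assms(2))

lemma conn_set:
  assumes "cluster_connected W"
  shows "cluster_connected (mset_set (set_mset W))"
proof -
  define \<Gamma> where "\<Gamma> = set_mset W"
  define W' where "W' = mset_set \<Gamma>"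
  have cnt: "count W' l = (if l \<in> \<Gamma> then 1 else 0)" for l
    by (simp add: W'_def \<Gamma>_def count_mset_set)
  have nodes': "ig_nodes W' = {(l, 0) | l. l \<in> \<Gamma>}"
    by (auto simp: ig_nodes_def cnt) (auto simp: W'_def \<Gamma>_def)
  define f :: "'a set set \<times> nat \<Rightarrow> 'a set set \<times> nat" where "f = (\<lambda>x. (fst x, 0))"
  have step: "(f a, f b) \<in> {(a, b). {a, b} \<in> ig_edges W'}\<^sup>*" if ab: "(a, b) \<in> {(a, b). {a, b} \<in> ig_edges W}" for a b
  proof -
    from ab obtain x y where xy: "{a, b} = {x, y}" "x \<in> ig_nodes W" "y \<in> ig_nodes W" "x \<noteq> y"
      "fst x = fst y \<or> \<not> compatible (fst x) (fst y)" unfolding ig_edges_def by blast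
    then have an: "a \<in> ig_nodes W" "b \<in> ig_nodes W" and c: "fst a = fst b \<or> \<not> compatible (fst a) (fst b)"
      by (auto simp: doubleton_eq_iff compatible_def Int_commute)
    show ?thesis
    proof (cases "fst a = fst b")
      case True then show ?thesis by (simp add: f_def)
    next
      case False
      then have nc: "\<not> compatible (fst a) (fst b)" using c by simp
      have "f a \<in> ig_nodes W'" "f b \<in> ig_nodes W'" using an by (auto simp: nodes' f_def ig_nodes_def \<Gamma>_def W'_def)
      then have "{f a, f b} \<in> ig_edges W'" using False nc unfolding ig_edges_def f_def by fastforce
      then show ?thesis by auto
    qed
  qed
  show ?thesis unfolding cluster_connected_def graph_connected_def
  proof (intro ballI)
    fix x y assume x: "x \<in> ig_nodes (mset_set (set_mset W))" and y: "y \<in> ig_nodes (mset_set (set_mset W))"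
    then obtain l l' where l: "x = (l, 0)" "l \<in> \<Gamma>" and l': "y = (l', 0)" "l' \<in> \<Gamma>"
      using nodes' by (auto simp: W'_def \<Gamma>_def)
    have "x \<in> ig_nodes W" "y \<in> ig_nodes W" using l l' by (auto simp: ig_nodes_def \<Gamma>_def)
    then have "(x, y) \<in> {(a, b). {a, b} \<in> ig_edges W}\<^sup>*"
      using assms by (auto simp: cluster_connected_def graph_connected_def)
    then have "(f x, f y) \<in> {(a, b). {a, b} \<in> ig_edges W'}\<^sup>*" by (rule rtrancl_map) (rule step)
    then show "(x, y) \<in> {(a, b). {a, b} \<in> ig_edges (mset_set (set_mset W))}\<^sup>*"
      using l l' by (simp add: f_def W'_def \<Gamma>_def)
  qed
qed

lemma has_sum_comb:
  fixes f1 f2 f3 f4 :: "'a \<Rightarrow> complex"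
  assumes "f1 summable_on X" "f2 summable_on X" "f3 summable_on X" "f4 summable_on X"
  shows "((\<lambda>x. f1 x + f2 x - f3 x - f4 x) has_sum (infsum f1 X + infsum f2 X - infsum f3 X - infsum f4 X)) X"
proof -
  have h: "(f1 has_sum infsum f1 X) X" "(f2 has_sum infsum f2 X) X"
     "((\<lambda>x. - f3 x) has_sum (- infsum f3 X)) X" "((\<lambda>x. - f4 x) has_sum (- infsum f4 X)) X"
    using assms by (auto simp: has_sum_uminus)
  have "((\<lambda>x. f1 x + f2 x + - f3 x + - f4 x) has_sum (infsum f1 X + infsum f2 X + - infsum f3 X + - infsum f4 X)) X"
    by (intro has_sum_add h)
  then show ?thesis by simp
qed

theorem mainTheorem9:
  fixes V :: "'v set" and E :: "'v set set" and D :: "'v set \<Rightarrow> 'd set"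
    and P :: "'v \<Rightarrow> 'p set" and T :: "'v \<Rightarrow> 'p \<Rightarrow> ('v set \<Rightarrow> 'd) \<Rightarrow> complex"
    and \<mu> :: "'v \<Rightarrow> 'v \<Rightarrow> 'd \<times> 'd \<Rightarrow> complex"
    and A B :: "'v set"
    and OA OB :: "('v \<Rightarrow> 'p) \<Rightarrow> ('v \<Rightarrow> 'p) \<Rightarrow> complex"
  defines "Op0 \<equiv> op_id V P"
    and "OpA \<equiv> op_on V A OA"
    and "OpB \<equiv> op_on V B OB"
    and "OpAB \<equiv> op_mult V P (op_on V A OA) (op_on V B OB)"
    and "L \<equiv> loops_AB E A B"
  assumes graph: "peps_data V E D P"
    and AB: "A \<subseteq> V" "B \<subseteq> V" "A \<inter> B = {}"
    and Zpos: "Zfull V E D P T Op0 \<in> \<real>" "Re (Zfull V E D P T Op0) > 0"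
    and bp: "bp_fixed_point V E D P T \<mu>"
    and ZBP_nz: "\<forall>Op\<in>{Op0, OpA, OpB, OpAB}. ZBP V E D P T \<mu> Op \<noteq> 0"
    and OA_nz: "Zfull V E D P T OpA / Zfull V E D P T Op0 \<noteq> 0"
    and OB_nz: "Zfull V E D P T OpB / Zfull V E D P T Op0 \<noteq> 0"
    and expansion: "\<forall>Op\<in>{Op0, OpA, OpB, OpAB}. cluster_expansion_holds V E D P T \<mu> L Op"
  shows
    "Zfull V E D P T OpAB / Zfull V E D P T Op0
       - (Zfull V E D P T OpA / Zfull V E D P T Op0) * (Zfull V E D P T OpB / Zfull V E D P T Op0)
     = (Zfull V E D P T OpA / Zfull V E D P T Op0) * (Zfull V E D P T OpB / Zfull V E D P T Op0) *
       (exp (\<Sum>\<Gamma>\<in>{\<Gamma>. \<Gamma> \<subseteq> L \<and> finite \<Gamma> \<and> cluster_connected (mset_set \<Gamma>) \<and>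
                     supp (\<Union>\<Gamma>) \<inter> A \<noteq> {} \<and> supp (\<Union>\<Gamma>) \<inter> B \<noteq> {}}.
               Kfun V E D P T \<mu> L OpAB \<Gamma> + Kfun V E D P T \<mu> L Op0 \<Gamma>
               - Kfun V E D P T \<mu> L OpA \<Gamma> - Kfun V E D P T \<mu> L OpB \<Gamma>) - 1)"
proof -
  note pd = graph
  have AV: "A \<subseteq> V" and BV: "B \<subseteq> V" and ABd: "A \<inter> B = {}" "B \<inter> A = {}" using AB by auto
  define w where "w = (\<lambda>Op W. ursell W * Zcluster V E D P T \<mu> Op W)"
  define CC where "CC = conn_clusters L"
  define d where "d = (\<lambda>W. w OpAB W + w Op0 W - w OpA W - w OpB W)"
  have exps: "Zfull V E D P T Op = ZBP V E D P T \<mu> Op * exp (infsum (w Op) CC)"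
    and summ: "w Op summable_on CC" if "Op \<in> {Op0, OpA, OpB, OpAB}" for Op
  proof -
    have c: "cluster_expansion_holds V E D P T \<mu> L Op" using expansion that by blast
    then show "Zfull V E D P T Op = ZBP V E D P T \<mu> Op * exp (infsum (w Op) CC)"
      by (simp add: cluster_expansion_holds_def w_def CC_def)
    have "(\<lambda>W. norm (w Op W)) summable_on CC" using c by (simp add: cluster_expansion_holds_def w_def CC_def)
    then show "w Op summable_on CC" by (rule abs_summable_summable)
  qed
  have dB0: "\<forall>s\<in>PiE V P. \<forall>s'\<in>PiE V P. Op0 s s' = op_id (V - B) P (restrict s (V - B)) (restrict s' (V - B)) * op_id B P (restrict s B) (restrict s' B)"
    unfolding Op0_def using op_id_split[OF BV] by blast
  have dBA: "\<forall>s\<in>PiE V P. \<forall>s'\<in>PiE V P. OpA s s' = op_on (V - B) A OA (restrict s (V - B)) (restrict s' (V - B)) * op_id B P (restrict s B) (restrict s' B)"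
    unfolding OpA_def using op_on_other_split[OF AV BV ABd(1)] by blast
  have dBB: "\<forall>s\<in>PiE V P. \<forall>s'\<in>PiE V P. OpB s s' = op_id (V - B) P (restrict s (V - B)) (restrict s' (V - B)) * OB (restrict s B) (restrict s' B)"
    unfolding OpB_def using op_on_S_split by blast
  have dBAB: "\<forall>s\<in>PiE V P. \<forall>s'\<in>PiE V P. OpAB s s' = op_on (V - B) A OA (restrict s (V - B)) (restrict s' (V - B)) * OB (restrict s B) (restrict s' B)"
    unfolding OpAB_def using op_AB_split(1)[OF pd AV BV ABd(1)] by blast
  have dA0: "\<forall>s\<in>PiE V P. \<forall>s'\<in>PiE V P. Op0 s s' = op_id (V - A) P (restrict s (V - A)) (restrict s' (V - A)) * op_id A P (restrict s A) (restrict s' A)"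
    unfolding Op0_def using op_id_split[OF AV] by blast
  have dAA: "\<forall>s\<in>PiE V P. \<forall>s'\<in>PiE V P. OpA s s' = op_id (V - A) P (restrict s (V - A)) (restrict s' (V - A)) * OA (restrict s A) (restrict s' A)"
    unfolding OpA_def using op_on_S_split by blast
  have dAB: "\<forall>s\<in>PiE V P. \<forall>s'\<in>PiE V P. OpB s s' = op_on (V - A) B OB (restrict s (V - A)) (restrict s' (V - A)) * op_id A P (restrict s A) (restrict s' A)"
    unfolding OpB_def using op_on_other_split[OF BV AV ABd(2)] by blast
  have dAAB: "\<forall>s\<in>PiE V P. \<forall>s'\<in>PiE V P. OpAB s s' = op_on (V - A) B OB (restrict s (V - A)) (restrict s' (V - A)) * OA (restrict s A) (restrict s' A)"
    unfolding OpAB_def using op_AB_split(2)[OF pd AV BV ABd(1)] by blast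
  have nz: "ZBP V E D P T \<mu> Op0 \<noteq> 0" "ZBP V E D P T \<mu> OpA \<noteq> 0" "ZBP V E D P T \<mu> OpB \<noteq> 0" "ZBP V E D P T \<mu> OpAB \<noteq> 0"
    using ZBP_nz by auto
  have bprod: "ZBP V E D P T \<mu> OpAB * ZBP V E D P T \<mu> Op0 = ZBP V E D P T \<mu> OpA * ZBP V E D P T \<mu> OpB"
    by (rule ZBP_prod[OF pd BV dBAB dBA dBB dB0])
  have lB: "Zloop V E D P T \<mu> OpAB l = Zloop V E D P T \<mu> OpA l \<and> Zloop V E D P T \<mu> OpB l = Zloop V E D P T \<mu> Op0 l"
    if "supp l \<inter> B = {}" for l
    using Zloop_eq[OF pd BV dBAB dBA that nz(4) nz(2)] Zloop_eq[OF pd BV dBB dB0 that nz(3) nz(1)] by simp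
  have lA: "Zloop V E D P T \<mu> OpAB l = Zloop V E D P T \<mu> OpB l \<and> Zloop V E D P T \<mu> OpA l = Zloop V E D P T \<mu> Op0 l"
    if "supp l \<inter> A = {}" for l
    using Zloop_eq[OF pd AV dAAB dAB that nz(4) nz(3)] Zloop_eq[OF pd AV dAA dA0 that nz(2) nz(1)] by simp
  have dz: "d W = 0" if "supp (\<Union>(set_mset W)) \<inter> A = {} \<or> supp (\<Union>(set_mset W)) \<inter> B = {}" for W
  proof -
    have sub: "supp l \<subseteq> supp (\<Union>(set_mset W))" if "l \<in># W" for l
      using that by (auto simp: supp_def)
    show ?thesis
    proof (cases "supp (\<Union>(set_mset W)) \<inter> B = {}")
      case True
      then have "\<forall>l\<in>#W. supp l \<inter> B = {}" using sub by blast
      then have "Zcluster V E D P T \<mu> OpAB W = Zcluster V E D P T \<mu> OpA W"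
        "Zcluster V E D P T \<mu> OpB W = Zcluster V E D P T \<mu> Op0 W"
        unfolding Zcluster_def using lB by (auto intro!: arg_cong[where f=prod_mset] image_mset_cong)
      then show ?thesis by (simp add: d_def w_def)
    next
      case False
      then have "supp (\<Union>(set_mset W)) \<inter> A = {}" using that by blast
      then have "\<forall>l\<in>#W. supp l \<inter> A = {}" using sub by blast
      then have "Zcluster V E D P T \<mu> OpAB W = Zcluster V E D P T \<mu> OpB W"
        "Zcluster V E D P T \<mu> OpA W = Zcluster V E D P T \<mu> Op0 W"
        unfolding Zcluster_def using lA by (auto intro!: arg_cong[where f=prod_mset] image_mset_cong)
      then show ?thesis by (simp add: d_def w_def)
    qed
  qed
  define SX where "SX = (\<lambda>Op. infsum (w Op) CC)"
  have hd: "(d has_sum (SX OpAB + SX Op0 - SX OpA - SX OpB)) CC"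
    unfolding d_def SX_def by (rule has_sum_comb) (auto intro: summ)
  then have dsum: "d summable_on CC" by (rule has_sum_imp_summable)
  define G where "G = {\<Gamma>. \<Gamma> \<subseteq> L \<and> finite \<Gamma> \<and> cluster_connected (mset_set \<Gamma>) \<and>
                     supp (\<Union>\<Gamma>) \<inter> A \<noteq> {} \<and> supp (\<Union>\<Gamma>) \<inter> B \<noteq> {}}"
  define CCG where "CCG = (\<lambda>\<Gamma>. {W \<in> conn_clusters L. set_mset W = \<Gamma>})"
  have finE: "finite E" using peps_fin[OF pd] by simp
  have finG: "finite G"
  proof (rule finite_subset[of _ "Pow L"])
    show "G \<subseteq> Pow L" by (auto simp: G_def)
    have "L \<subseteq> Pow E" by (auto simp: L_def loops_AB_def)
    then show "finite (Pow L)" using finE by (simp add: finite_subset)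
  qed
  have CCGsub: "CCG \<Gamma> \<subseteq> CC" for \<Gamma> by (auto simp: CCG_def CC_def)
  have Kg: "Kfun V E D P T \<mu> L OpAB \<Gamma> + Kfun V E D P T \<mu> L Op0 \<Gamma> - Kfun V E D P T \<mu> L OpA \<Gamma> - Kfun V E D P T \<mu> L OpB \<Gamma>
     = infsum d (CCG \<Gamma>)" for \<Gamma>
  proof -
    have "w Op summable_on CCG \<Gamma>" if "Op \<in> {Op0, OpA, OpB, OpAB}" for Op
      using summable_on_subset_banach[OF summ[OF that] CCGsub] .
    then have "(d has_sum (infsum (w OpAB) (CCG \<Gamma>) + infsum (w Op0) (CCG \<Gamma>) - infsum (w OpA) (CCG \<Gamma>) - infsum (w OpB) (CCG \<Gamma>))) (CCG \<Gamma>)"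
      unfolding d_def by (intro has_sum_comb) auto
    then show ?thesis unfolding Kfun_def w_def CCG_def by (simp add: infsumI)
  qed
  have "infsum d CC = infsum d (\<Union>\<Gamma>\<in>G. CCG \<Gamma>)"
  proof (rule infsum_cong_neutral)
    fix W assume "W \<in> CC - (\<Union>\<Gamma>\<in>G. CCG \<Gamma>)"
    then have W: "W \<in> CC" "W \<notin> (\<Union>\<Gamma>\<in>G. CCG \<Gamma>)" by auto
    have "set_mset W \<notin> G" using W by (auto simp: CCG_def CC_def)
    moreover have "set_mset W \<subseteq> L" "cluster_connected (mset_set (set_mset W))"
      using W(1) conn_set by (auto simp: CC_def conn_clusters_def)
    ultimately have "supp (\<Union>(set_mset W)) \<inter> A = {} \<or> supp (\<Union>(set_mset W)) \<inter> B = {}"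
      by (auto simp: G_def)
    then show "d W = 0" by (rule dz)
  next
    fix W assume "W \<in> (\<Union>\<Gamma>\<in>G. CCG \<Gamma>) - CC" then show "d W = 0" using CCGsub by auto
  qed simp
  also have "\<dots> = (\<Sum>\<Gamma>\<in>G. infsum d (CCG \<Gamma>))"
  proof (rule sum_infsum[symmetric])
    show "finite G" by (rule finG)
    show "d summable_on CCG \<Gamma>" for \<Gamma> using summable_on_subset_banach[OF dsum CCGsub] .
    show "CCG \<Gamma> \<inter> CCG \<Gamma>' = {}" if "\<Gamma> \<noteq> \<Gamma>'" for \<Gamma> \<Gamma>' using that by (auto simp: CCG_def)
  qed
  finally have Ksum: "(\<Sum>\<Gamma>\<in>G. Kfun V E D P T \<mu> L OpAB \<Gamma> + Kfun V E D P T \<mu> L Op0 \<Gamma> - Kfun V E D P T \<mu> L OpA \<Gamma> - Kfun V E D P T \<mu> L OpB \<Gamma>)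
      = SX OpAB + SX Op0 - SX OpA - SX OpB"
    using infsumI[OF hd] Kg by simp
  define K where "K = SX OpAB + SX Op0 - SX OpA - SX OpB"
  have z0: "Zfull V E D P T Op0 \<noteq> 0" using Zpos(2) by auto
  have "Zfull V E D P T OpAB * Zfull V E D P T Op0 = Zfull V E D P T OpA * Zfull V E D P T OpB * exp K"
  proof -
    have "Zfull V E D P T OpAB * Zfull V E D P T Op0 =
        (ZBP V E D P T \<mu> OpAB * ZBP V E D P T \<mu> Op0) * exp (SX OpAB + SX Op0)"
      using exps by (simp add: SX_def exp_add ac_simps)
    also have "SX OpAB + SX Op0 = SX OpA + SX OpB + K" by (simp add: K_def)
    also have "(ZBP V E D P T \<mu> OpAB * ZBP V E D P T \<mu> Op0) * exp (SX OpA + SX OpB + K) =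
       (ZBP V E D P T \<mu> OpA * exp (SX OpA)) * (ZBP V E D P T \<mu> OpB * exp (SX OpB)) * exp K"
      unfolding bprod by (simp add: exp_add ac_simps)
    also have "\<dots> = Zfull V E D P T OpA * Zfull V E D P T OpB * exp K"
      using exps by (simp add: SX_def)
    finally show ?thesis .
  qed
  then show ?thesis using Ksum z0 unfolding G_def K_def[symmetric]
    by (simp add: field_simps power2_eq_square)
qed

end
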